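(* Consider an asynchronous shared-memory system of $n$ processes in which up to $t$ processes may crash, with $n > 2t$. For every integer $k > \frac{n-t}{n-2t}$, algorithm $\mathcal{A}_3$ (described in the context) solves $k$-set agreement.
   Context: $k$-set agreement (decisions allowed in $V\cup\{\bot\}$, $\bot$ counting as a decided value): each process proposes an initial value from a set $V$; (Validity) if all correct processes propose the same value $v$, no correct process decides a value different from $v$; (Agreement) at most $k$ distinct values are decided by correct processes; (Termination) every correct process eventually decides. A crashed process stops taking steps; a correct process never crashes. Model: processes communicate through an atomic snapshot object $S$ with one entry per process (initially all $\bot$), supporting $\mathrm{update}(m)$ (process $p_i$ writes $m$ into its own entry) and $\mathrm{snapshot}()$ (returns the vector of all entries), both atomic (linearizable) and wait-free. Asynchronous: no timing bounds. Algorithm $\mathcal{A}_3$, code of $p_i$ with initial value $m$: $p_i$ performs $S.\mathrm{update}(m)$, then repeatedly calls $L_i := S.\mathrm{snapshot}()$ until $L_i$ has at least $n-t$ non-$\bot$ entries; it sets $X_i := L_i$ and $x_i :=$ number of non-$\bot$ entries of $X_i$. If at least $x_i - t$ entries of $X_i$ equal $m$, it decides $m$; else, if some value $v$ has at least $x_i - t$ entries in $X_i$ equal to it, it decides such a $v$; else it decides $\bot$. *)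

theory Defs
  imports Main "HOL.Real"
begin

text \<open>An entry of the snapshot object
 is None (bottom) or Some m. Every atomic step of a process is either its update,
 one snapshot (followed by the purely local decision computation), or a no-op once
 it has decided.\<close>

datatype 'v phase = Init | Scanning | Decided "'v option"

record 'v a3_cfg =
  mem :: "nat \<Rightarrow> 'v option"
  pc  :: "nat \<Rightarrow> 'v phase"

definition a3_init :: "'v a3_cfg" where
  "a3_init = \<lparr>mem = (\<lambda>_. None), pc = (\<lambda>_. Init)\<rparr>"

definition nonbot :: "nat \<Rightarrow> (nat \<Rightarrow> 'v option) \<Rightarrow> nat" where
  "nonbot n L = card {j \<in> {..<n}. L j \<noteq> None}"

definition cnt :: "nat \<Rightarrow> (nat \<Rightarrow> 'v option) \<Rightarrow> 'v \<Rightarrow> nat" where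
  "cnt n L v = card {j \<in> {..<n}. L j = Some v}"

text \<open>Decision rule of A3 given own value m and the snapshot X; d = None is bottom.
 The choice of "such a v" is nondeterministic.\<close>
definition a3_decide :: "nat \<Rightarrow> nat \<Rightarrow> 'v \<Rightarrow> (nat \<Rightarrow> 'v option) \<Rightarrow> 'v option \<Rightarrow> bool" where
  "a3_decide n t m X d =
    (let x = nonbot n X in
      if cnt n X m \<ge> x - t then d = Some m
      else if (\<exists>v. cnt n X v \<ge> x - t) then (\<exists>v. d = Some v \<and> cnt n X v \<ge> x - t)
      else d = None)"

definition a3_step :: "nat \<Rightarrow> nat \<Rightarrow> (nat \<Rightarrow> 'v) \<Rightarrow> nat \<Rightarrow> 'v a3_cfg \<Rightarrow> 'v a3_cfg \<Rightarrow> bool" where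
  "a3_step n t inp i c c' =
    ((pc c i = Init \<and> c' = c\<lparr>mem := (mem c)(i := Some (inp i)), pc := (pc c)(i := Scanning)\<rparr>)
   \<or> (pc c i = Scanning \<and> nonbot n (mem c) < n - t \<and> c' = c)
   \<or> (pc c i = Scanning \<and> nonbot n (mem c) \<ge> n - t \<and>
        (\<exists>d. a3_decide n t (inp i) (mem c) d \<and> c' = c\<lparr>pc := (pc c)(i := Decided d)\<rparr>))
   \<or> (\<exists>d. pc c i = Decided d \<and> c' = c))"

text \<open>An execution: schedule sched (process taking step s), configurations cfg,
 set C of correct processes.\<close>
definition a3_run :: "nat \<Rightarrow> nat \<Rightarrow> (nat \<Rightarrow> 'v) \<Rightarrow> (nat \<Rightarrow> nat) \<Rightarrow> nat set \<Rightarrow> (nat \<Rightarrow> 'v a3_cfg) \<Rightarrow> bool" where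
  "a3_run n t inp sched C cfg =
    (cfg 0 = a3_init
     \<and> (\<forall>s. sched s < n \<and> a3_step n t inp (sched s) (cfg s) (cfg (Suc s)))
     \<and> C \<subseteq> {..<n} \<and> card ({..<n} - C) \<le> t
     \<and> (\<forall>i\<in>C. \<forall>s. \<exists>s'\<ge>s. sched s' = i)
     \<and> (\<forall>i\<in>{..<n} - C. finite {s. sched s = i}))"

definition a3_decided :: "(nat \<Rightarrow> 'v a3_cfg) \<Rightarrow> nat \<Rightarrow> 'v option \<Rightarrow> bool" where
  "a3_decided cfg i d = (\<exists>s. pc (cfg s) i = Decided d)"

definition k_set_agreement :: "nat \<Rightarrow> (nat \<Rightarrow> 'v) \<Rightarrow> nat set \<Rightarrow> (nat \<Rightarrow> 'v a3_cfg) \<Rightarrow> bool" where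
  "k_set_agreement k inp C cfg =
    ((\<forall>v. (\<forall>i\<in>C. inp i = v) \<longrightarrow> (\<forall>i\<in>C. \<forall>d. a3_decided cfg i d \<longrightarrow> d = Some v))
     \<and> finite {d. \<exists>i\<in>C. a3_decided cfg i d}
     \<and> card {d. \<exists>i\<in>C. a3_decided cfg i d} \<le> k
     \<and> (\<forall>i\<in>C. \<exists>d. a3_decided cfg i d))"

definition a3_solves_k_set_agreement :: "nat \<Rightarrow> nat \<Rightarrow> nat \<Rightarrow> 'v itself \<Rightarrow> bool" where
  "a3_solves_k_set_agreement n t k _ =
    (\<forall>(inp :: nat \<Rightarrow> 'v) sched C cfg. a3_run n t inp sched C cfg \<longrightarrow> k_set_agreement k inp C cfg)"

end

theory Submission
  imports Defs
begin

lemma step_mem: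
  assumes "a3_step n t inp i c c'"
  shows "mem c' = (if pc c i = Init then (mem c)(i := Some (inp i)) else mem c)"
  using assms unfolding a3_step_def by auto

lemma step_pc_other:
  assumes "a3_step n t inp i c c'" "j \<noteq> i"
  shows "pc c' j = pc c j"
  using assms unfolding a3_step_def by auto

lemma step_pc_self:
  assumes "a3_step n t inp i c c'"
  shows "(pc c i = Init \<and> pc c' i = Scanning)
    \<or> (pc c i = Scanning \<and> pc c' i = Scanning \<and> nonbot n (mem c) < n - t)
    \<or> (pc c i = Scanning \<and> nonbot n (mem c) \<ge> n - t \<and>
        (\<exists>d. a3_decide n t (inp i) (mem c) d \<and> pc c' i = Decided d))
    \<or> (\<exists>d. pc c i = Decided d \<and> pc c' i = Decided d)"
  using assms unfolding a3_step_def by auto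

lemma run_inv:
  assumes run: "a3_run n t inp sched C cfg"
  shows "(\<forall>j a. mem (cfg s) j = Some a \<longrightarrow> a = inp j)
    \<and> (\<forall>j. pc (cfg s) j \<noteq> Init \<longrightarrow> mem (cfg s) j \<noteq> None)
    \<and> (\<forall>j d. pc (cfg s) j = Decided d \<longrightarrow> (\<exists>s'<s. nonbot n (mem (cfg s')) \<ge> n - t
           \<and> a3_decide n t (inp j) (mem (cfg s')) d))"
proof (induction s)
  case 0
  then show ?case using run unfolding a3_run_def a3_init_def by auto
next
  case (Suc s)
  have st: "a3_step n t inp (sched s) (cfg s) (cfg (Suc s))"
    using run unfolding a3_run_def by auto
  let ?i = "sched s"
  have A: "\<forall>j a. mem (cfg (Suc s)) j = Some a \<longrightarrow> a = inp j"
    using step_mem[OF st] Suc.IH by (auto split: if_splits)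
  have B: "\<forall>j. pc (cfg (Suc s)) j \<noteq> Init \<longrightarrow> mem (cfg (Suc s)) j \<noteq> None"
  proof (intro allI impI)
    fix j assume j: "pc (cfg (Suc s)) j \<noteq> Init"
    show "mem (cfg (Suc s)) j \<noteq> None"
    proof (cases "j = ?i")
      case True
      then show ?thesis using step_mem[OF st] step_pc_self[OF st] Suc.IH j by auto
    next
      case False
      then show ?thesis using step_mem[OF st] step_pc_other[OF st False] Suc.IH j by auto
    qed
  qed
  have C: "\<forall>j d. pc (cfg (Suc s)) j = Decided d \<longrightarrow> (\<exists>s'<Suc s. nonbot n (mem (cfg s')) \<ge> n - t
           \<and> a3_decide n t (inp j) (mem (cfg s')) d)"
  proof (intro allI impI)
    fix j d assume j: "pc (cfg (Suc s)) j = Decided d"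
    show "\<exists>s'<Suc s. nonbot n (mem (cfg s')) \<ge> n - t \<and> a3_decide n t (inp j) (mem (cfg s')) d"
    proof (cases "j = ?i")
      case True
      from step_pc_self[OF st] show ?thesis
      proof (elim disjE)
        assume "pc (cfg s) ?i = Init \<and> pc (cfg (Suc s)) ?i = Scanning"
        then show ?thesis using j True by auto
      next
        assume "pc (cfg s) ?i = Scanning \<and> pc (cfg (Suc s)) ?i = Scanning \<and> nonbot n (mem (cfg s)) < n - t"
        then show ?thesis using j True by auto
      next
        assume "pc (cfg s) ?i = Scanning \<and> nonbot n (mem (cfg s)) \<ge> n - t \<and>
        (\<exists>d. a3_decide n t (inp ?i) (mem (cfg s)) d \<and> pc (cfg (Suc s)) ?i = Decided d)"
        then show ?thesis using j True by (metis lessI phase.inject)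
      next
        assume "\<exists>d. pc (cfg s) ?i = Decided d \<and> pc (cfg (Suc s)) ?i = Decided d"
        then show ?thesis using j True Suc.IH less_Suc_eq by (metis phase.inject)
      qed
    next
      case False
      then show ?thesis using step_pc_other[OF st False] Suc.IH j less_Suc_eq by metis
    qed
  qed
  show ?case using A B C by blast
qed

lemma mem_mono1:
  assumes run: "a3_run n t inp sched C cfg" and "mem (cfg s) j = Some a"
  shows "mem (cfg (Suc s)) j = Some a"
proof -
  have st: "a3_step n t inp (sched s) (cfg s) (cfg (Suc s))"
    using run unfolding a3_run_def by auto
  show ?thesis using step_mem[OF st] run_inv[OF run, of s] assms(2) by auto
qed

lemma mem_mono:
  assumes run: "a3_run n t inp sched C cfg" and "mem (cfg s) j = Some a" and "s \<le> s'"
  shows "mem (cfg s') j = Some a"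
  using assms(3,2)
proof (induction s' rule: dec_induct)
  case base then show ?case by simp
next
  case (step m) then show ?case using mem_mono1[OF run] by blast
qed

lemma pc_mono1:
  assumes run: "a3_run n t inp sched C cfg" and "pc (cfg s) j \<noteq> Init"
  shows "pc (cfg (Suc s)) j \<noteq> Init"
proof -
  have st: "a3_step n t inp (sched s) (cfg s) (cfg (Suc s))"
    using run unfolding a3_run_def by auto
  show ?thesis
  proof (cases "j = sched s")
    case True then show ?thesis using step_pc_self[OF st] assms(2) by auto
  next
    case False then show ?thesis using step_pc_other[OF st False] assms(2) by auto
  qed
qed

lemma pc_mono:
  assumes run: "a3_run n t inp sched C cfg" and "pc (cfg s) j \<noteq> Init" and "s \<le> s'"
  shows "pc (cfg s') j \<noteq> Init"
  using assms(3,2)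
proof (induction s' rule: dec_induct)
  case base then show ?case by simp
next
  case (step m) then show ?case using pc_mono1[OF run] by blast
qed

lemma nonbot_mono:
  assumes run: "a3_run n t inp sched C cfg" and "s \<le> s'"
  shows "nonbot n (mem (cfg s)) \<le> nonbot n (mem (cfg s'))"
  unfolding nonbot_def
  by (rule card_mono) (auto dest: mem_mono[OF run _ assms(2)])


lemma decide_some:
  assumes "a3_decide n t m X (Some v)"
  shows "cnt n X v \<ge> nonbot n X - t"
  using assms unfolding a3_decide_def Let_def by (auto split: if_splits)

lemma decide_exists: "\<exists>d. a3_decide n t m X d"
  unfolding a3_decide_def Let_def by auto

lemma cnt_shift:
  assumes run: "a3_run n t inp sched C cfg" and "s0 \<le> s"
    and "cnt n (mem (cfg s)) v \<ge> nonbot n (mem (cfg s)) - t"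
  shows "cnt n (mem (cfg s0)) v \<ge> nonbot n (mem (cfg s0)) - t"
proof -
  define A0 where "A0 = {j \<in> {..<n}. mem (cfg s0) j = Some v}"
  define As where "As = {j \<in> {..<n}. mem (cfg s) j = Some v}"
  define N0 where "N0 = {j \<in> {..<n}. mem (cfg s0) j \<noteq> None}"
  define Ns where "Ns = {j \<in> {..<n}. mem (cfg s) j \<noteq> None}"
  have sub1: "N0 \<subseteq> Ns" unfolding N0_def Ns_def using mem_mono[OF run _ assms(2)] by fastforce
  have sub2: "As \<subseteq> A0 \<union> (Ns - N0)" unfolding As_def A0_def Ns_def N0_def
    using mem_mono[OF run _ assms(2)] by fastforce
  have fin: "finite Ns" "finite A0" unfolding Ns_def A0_def by auto
  have "card As \<le> card (A0 \<union> (Ns - N0))" using sub2 fin by (intro card_mono) auto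
  also have "\<dots> \<le> card A0 + card (Ns - N0)" by (rule card_Un_le)
  also have "card (Ns - N0) = card Ns - card N0" using sub1 fin by (simp add: card_Diff_subset finite_subset)
  finally have "card As \<le> card A0 + (card Ns - card N0)" .
  moreover have "card N0 \<le> card Ns" using sub1 fin by (simp add: card_mono)
  moreover have "card As \<ge> card Ns - t" using assms(3) unfolding cnt_def nonbot_def As_def Ns_def .
  ultimately have "card A0 \<ge> card N0 - t" by linarith
  then show ?thesis unfolding cnt_def nonbot_def A0_def N0_def .
qed

lemma cnt_sum:
  assumes "finite D"
  shows "(\<Sum>v\<in>D. cnt n X v) \<le> nonbot n X"
proof -
  have "(\<Sum>v\<in>D. cnt n X v) = card (\<Union>v\<in>D. {j \<in> {..<n}. X j = Some v})"
    unfolding cnt_def using assms by (subst card_UN_disjoint) auto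
  also have "\<dots> \<le> nonbot n X" unfolding nonbot_def by (rule card_mono) auto
  finally show ?thesis .
qed

lemma arith_core:
  fixes n t k p x :: nat
  assumes "n > 2 * t" and "real k > (real n - real t) / (real n - 2 * real t)"
    and "x \<ge> n - t" and "p * (x - t) \<le> x"
  shows "p < k"
proof (rule ccontr)
  assume "\<not> p < k"
  hence pk: "k \<le> p" by simp
  have pos: "real n - 2 * real t > 0" using assms(1) by simp
  have h: "real k * (real n - 2 * real t) > real n - real t"
    using assms(2) pos by (simp add: pos_divide_less_eq)
  have xt: "real x \<ge> real n - real t" using assms(1,3) by linarith
  have "k * (x - t) \<le> p * (x - t)" using pk by (simp add: mult_right_mono)
  hence "k * (x - t) \<le> x" using assms(4) by linarith
  moreover have "t \<le> x" using assms(1,3) by linarith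
  ultimately have "real k * (real x - real t) \<le> real x"
    by (metis of_nat_diff of_nat_le_iff of_nat_mult)
  hence a: "(real k - 1) * real x \<le> real k * real t" by (simp add: algebra_simps)
  have k1: "real k \<ge> 1" proof (rule ccontr)
    assume "\<not> real k \<ge> 1"
    hence "real k \<le> 1" by simp
    hence "real k * (real n - 2 * real t) \<le> 1 * (real n - 2 * real t)"
      using pos by (intro mult_right_mono) auto
    with h show False by simp
  qed
  have "(real k - 1) * (real n - real t) \<le> (real k - 1) * real x"
    using k1 xt by (intro mult_left_mono) auto
  with a h show False by (simp add: algebra_simps)
qed

lemma decided_inv:
  assumes run: "a3_run n t inp sched C cfg" and "a3_decided cfg i d"
  shows "\<exists>s. nonbot n (mem (cfg s)) \<ge> n - t \<and> a3_decide n t (inp i) (mem (cfg s)) d"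
  using assms(2) run_inv[OF run] unfolding a3_decided_def by blast

lemma validity_cnt:
  assumes run: "a3_run n t inp sched C cfg" and allv: "\<forall>i\<in>C. inp i = v"
  shows "cnt n (mem (cfg s)) v \<ge> nonbot n (mem (cfg s)) - t"
proof -
  let ?X = "mem (cfg s)"
  have inv: "\<forall>j a. ?X j = Some a \<longrightarrow> a = inp j" using run_inv[OF run] by blast
  have cC: "C \<subseteq> {..<n}" "card ({..<n} - C) \<le> t" using run unfolding a3_run_def by auto
  have "{j \<in> {..<n}. ?X j \<noteq> None} \<subseteq> {j \<in> {..<n}. ?X j = Some v} \<union> ({..<n} - C)"
    using inv allv by auto
  hence "card {j \<in> {..<n}. ?X j \<noteq> None} \<le> card ({j \<in> {..<n}. ?X j = Some v} \<union> ({..<n} - C))"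
    by (intro card_mono) auto
  also have "\<dots> \<le> card {j \<in> {..<n}. ?X j = Some v} + card ({..<n} - C)" by (rule card_Un_le)
  finally show ?thesis using cC unfolding cnt_def nonbot_def by linarith
qed

lemma termination_lemma:
  assumes run: "a3_run n t inp sched C cfg" and iC: "i \<in> C"
  shows "\<exists>d. a3_decided cfg i d"
proof -
  have R: "cfg 0 = a3_init" "\<forall>s. sched s < n \<and> a3_step n t inp (sched s) (cfg s) (cfg (Suc s))"
     "C \<subseteq> {..<n}" "card ({..<n} - C) \<le> t" "\<forall>i\<in>C. \<forall>s. \<exists>s'\<ge>s. sched s' = i"
    using run unfolding a3_run_def by auto
  have "\<forall>j\<in>C. \<exists>s. sched s = j" using R(5) by blast
  then obtain f where f: "\<forall>j\<in>C. sched (f j) = j" by metis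
  have finC: "finite C" using R(3) finite_subset by blast
  define S where "S = Suc (Max (f ` C))"
  have notinit: "pc (cfg S) j \<noteq> Init" if "j \<in> C" for j
  proof -
    have st: "a3_step n t inp j (cfg (f j)) (cfg (Suc (f j)))" using R(2) f that by metis
    have "pc (cfg (Suc (f j))) j \<noteq> Init" using step_pc_self[OF st] by auto
    moreover have "Suc (f j) \<le> S" unfolding S_def using finC that by auto
    ultimately show ?thesis using pc_mono[OF run] by blast
  qed
  have "C \<subseteq> {j \<in> {..<n}. mem (cfg S) j \<noteq> None}"
    using notinit run_inv[OF run, of S] R(3) by blast
  hence "card C \<le> nonbot n (mem (cfg S))" unfolding nonbot_def by (intro card_mono) auto
  moreover have "card ({..<n} - C) = n - card C" using R(3) finC by (simp add: card_Diff_subset)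
  ultimately have big: "nonbot n (mem (cfg S)) \<ge> n - t" using R(4) by linarith
  obtain s' where s': "s' \<ge> S" "sched s' = i" using R(5) iC by blast
  have st: "a3_step n t inp i (cfg s') (cfg (Suc s'))" using R(2) s' by metis
  have "pc (cfg s') i \<noteq> Init" using pc_mono[OF run notinit[OF iC] s'(1)] .
  moreover have "nonbot n (mem (cfg s')) \<ge> n - t" using nonbot_mono[OF run s'(1)] big by linarith
  ultimately have "\<exists>d. pc (cfg (Suc s')) i = Decided d \<or> pc (cfg s') i = Decided d"
    using step_pc_self[OF st] by auto
  then show ?thesis unfolding a3_decided_def by blast
qed

theorem theorem6:
  fixes n t k :: nat
  assumes "n > 2 * t"
    and "real k > (real n - real t) / (real n - 2 * real t)"
  shows "a3_solves_k_set_agreement n t k TYPE('v)"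
  unfolding a3_solves_k_set_agreement_def
proof (intro allI impI)
  fix inp :: "nat \<Rightarrow> 'v" and sched C cfg
  assume run: "a3_run n t inp sched C cfg"
  have val: "\<forall>v. (\<forall>i\<in>C. inp i = v) \<longrightarrow> (\<forall>i\<in>C. \<forall>d. a3_decided cfg i d \<longrightarrow> d = Some v)"
  proof (intro allI impI ballI)
    fix v i d assume allv: "\<forall>i\<in>C. inp i = v" and iC: "i \<in> C" and dec: "a3_decided cfg i d"
    obtain s where s: "a3_decide n t (inp i) (mem (cfg s)) d"
      using decided_inv[OF run dec] by blast
    have "cnt n (mem (cfg s)) v \<ge> nonbot n (mem (cfg s)) - t" using validity_cnt[OF run allv] .
    then show "d = Some v" using s allv iC unfolding a3_decide_def Let_def by auto
  qed
  define D where "D = {d. \<exists>i\<in>C. a3_decided cfg i d}"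
  define D' where "D' = {v. Some v \<in> D}"
  define good where "good v s \<longleftrightarrow> nonbot n (mem (cfg s)) \<ge> n - t \<and>
      cnt n (mem (cfg s)) v \<ge> nonbot n (mem (cfg s)) - t" for v s
  have goodD: "\<exists>s. good v s" if "v \<in> D'" for v
  proof -
    from that obtain i where "a3_decided cfg i (Some v)" unfolding D'_def D_def by blast
    from decided_inv[OF run this] obtain s where "n - t \<le> nonbot n (mem (cfg s))"
      "a3_decide n t (inp i) (mem (cfg s)) (Some v)" by blast
    then have "good v s" unfolding good_def using decide_some[of n t "inp i" "mem (cfg s)" v] by simp
    then show ?thesis by blast
  qed
  have good_inp: "v \<in> inp ` {..<n}" if "good v s" for v s
  proof -
    have "cnt n (mem (cfg s)) v > 0" using that assms(1) unfolding good_def by linarith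
    then obtain j where "j < n" "mem (cfg s) j = Some v" unfolding cnt_def
      by (metis (mono_tags, lifting) card.empty empty_Collect_eq lessThan_iff less_irrefl)
    then show ?thesis using run_inv[OF run, of s] by blast
  qed
  have finD': "finite D'"
    by (rule finite_subset[of _ "inp ` {..<n}"]) (use goodD good_inp in blast)+
  have Dsub: "D \<subseteq> insert None (Some ` D')" unfolding D'_def by (auto, metis image_eqI mem_Collect_eq not_None_eq)
  have cardD': "card D' < k"
  proof (cases "D' = {}")
    case True
    then show ?thesis using arith_core[OF assms, of n 0] by simp
  next
    case False
    then obtain v1 where "v1 \<in> D'" by blast
    then obtain s1 where s1: "good v1 s1" using goodD by blast
    define s0 where "s0 = (LEAST s. \<exists>v\<in>D'. good v s)"
    have ex0: "\<exists>v\<in>D'. good v s0" unfolding s0_def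
      by (rule LeastI[of _ s1]) (use s1 \<open>v1 \<in> D'\<close> in blast)
    have x0: "nonbot n (mem (cfg s0)) \<ge> n - t" using ex0 unfolding good_def by blast
    have each: "cnt n (mem (cfg s0)) v \<ge> nonbot n (mem (cfg s0)) - t" if vD: "v \<in> D'" for v
    proof -
      obtain s where s: "good v s" using goodD vD by blast
      have "s0 \<le> s" unfolding s0_def by (rule Least_le) (use s vD in blast)
      then show ?thesis using cnt_shift[OF run] s unfolding good_def by blast
    qed
    have "card D' * (nonbot n (mem (cfg s0)) - t) = (\<Sum>v\<in>D'. nonbot n (mem (cfg s0)) - t)" by simp
    also have "\<dots> \<le> (\<Sum>v\<in>D'. cnt n (mem (cfg s0)) v)" using each by (intro sum_mono) auto
    also have "\<dots> \<le> nonbot n (mem (cfg s0))" using cnt_sum[OF finD'] .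
    finally show ?thesis using arith_core[OF assms x0] by blast
  qed
  have finD: "finite D" using Dsub finD' finite_subset by blast
  have "card D \<le> card (insert None (Some ` D'))" using Dsub finD' by (intro card_mono) auto
  also have "\<dots> \<le> Suc (card (Some ` D'))" by (simp add: card_insert_le_m1)
  also have "\<dots> \<le> Suc (card D')" using card_image_le[OF finD', of Some] by simp
  finally have cardD: "card D \<le> k" using cardD' by linarith
  show "k_set_agreement k inp C cfg"
    unfolding k_set_agreement_def
    using val finD cardD termination_lemma[OF run] unfolding D_def by blast
qed

end
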